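(* Let $\gamma=\begin{pmatrix}a&b\\c&d\end{pmatrix}\in\mathrm{PSL}(2,\mathbb{Z})$, $n=\mathcal{R}(\gamma;z_q)$, let $x_\gamma,y_\gamma$ be as in the context, and define the integers \[ r=a+d,\quad u=b-|z_q|^2c-2\mu d,\quad s=a-d-2\mu c,\quad t=b+|z_q|^2c. \] Then $N(u+rz_q)=n+2\lambda^2$, $N(t+sz_q)=n-2\lambda^2$, and \[ y_\gamma+ix_\gamma=(u+rz_q)(t+s\overline{z_q}). \] Moreover, for every $n\in\mathcal{N}_{z_q}$, the set $L_n=\{(x_\gamma,y_\gamma):\gamma\in\Gamma_{z_q,n}\}$ satisfies \[ |L_n|=\frac{2c_n}{|\mathcal{O}_K^\times|}\,r_K(n+2\lambda^2)\,r_K(n-2\lambda^2), \] with $c_n=1/2$ if ($q$ even and $2\mid n$) or ($q$ odd and $q\mid 2n$), and $c_n=1/4$ otherwise.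
   Context: Let $q\in\{3,4,7,8,11,19,43,67,163\}$, $K$ the imaginary quadratic field of discriminant $-q$ (class number one), with ring of integers $\mathcal{O}_K$, unit group $\mathcal{O}_K^\times$, norm $N$; $r_K(M)$ is the number of elements of $\mathcal{O}_K$ of norm $M$ ($r_K(0)=1$). Let $z_q=\mu+i\lambda$ with $\mu=0$ if $q\in\{4,8\}$, $\mu=1/2$ otherwise, $\lambda=\sqrt q/2$. $\mathbb{H}$ is the upper half-plane with hyperbolic distance $\rho$, $\cosh\rho(z,w)=1+\frac{|z-w|^2}{2\,\mathrm{Im}(z)\mathrm{Im}(w)}$; $\Gamma=\mathrm{PSL}(2,\mathbb{Z})$. For $\gamma\in\Gamma$, $\mathcal{R}(\gamma;z_q)=2\lambda^2\cosh\rho(z_q,\gamma z_q)$, $\mathcal{N}_{z_q}=\{\mathcal{R}(\gamma;z_q):\gamma\in\Gamma\}$, $\Gamma_{z_q,n}=\{\gamma:\mathcal{R}(\gamma;z_q)=n\}$. For $\gamma=\begin{pmatrix}a&b\\c&d\end{pmatrix}$ with $n=\mathcal{R}(\gamma;z_q)$: $x_\gamma=2\lambda((\mu a+b)(\mu c+d)+\lambda^2ac-\mu((\mu c+d)^2+\lambda^2c^2))$ and $y_\gamma=n-2\lambda^2((\mu c+d)^2+\lambda^2c^2)$ (these do not depend on the sign of the matrix representing $\gamma$). *)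

theory Defs
  imports "HOL-Analysis.Analysis"
begin

definition mu :: "nat \<Rightarrow> real" where
  "mu q = (if q \<in> {4, 8} then 0 else 1/2)"

definition lam :: "nat \<Rightarrow> real" where
  "lam q = sqrt (real q) / 2"

definition zq :: "nat \<Rightarrow> complex" where
  "zq q = Complex (mu q) (lam q)"

definition OK :: "nat \<Rightarrow> complex set" where
  "OK q = {of_int u + of_int r * zq q | u r :: int. True}"

definition normK :: "complex \<Rightarrow> real" where
  "normK w = (cmod w)^2"

definition rK :: "nat \<Rightarrow> real \<Rightarrow> nat" where
  "rK q M = card {w \<in> OK q. normK w = M}"

definition unitsK :: "nat \<Rightarrow> complex set" where
  "unitsK q = {w \<in> OK q. \<exists>v \<in> OK q. w * v = 1}"

definition moeb :: "int \<Rightarrow> int \<Rightarrow> int \<Rightarrow> int \<Rightarrow> complex \<Rightarrow> complex" where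
  "moeb a b c d z = (of_int a * z + of_int b) / (of_int c * z + of_int d)"

definition hdist :: "complex \<Rightarrow> complex \<Rightarrow> real" where
  "hdist z w = arcosh (1 + (cmod (z - w))^2 / (2 * Im z * Im w))"

definition Rg :: "nat \<Rightarrow> int \<Rightarrow> int \<Rightarrow> int \<Rightarrow> int \<Rightarrow> real" where
  "Rg q a b c d = 2 * (lam q)^2 * cosh (hdist (zq q) (moeb a b c d (zq q)))"

definition xg :: "nat \<Rightarrow> int \<Rightarrow> int \<Rightarrow> int \<Rightarrow> int \<Rightarrow> real" where
  "xg q a b c d = 2 * lam q * ((mu q * a + b) * (mu q * c + d) + (lam q)^2 * a * c
      - mu q * ((mu q * c + d)^2 + (lam q)^2 * c^2))"

definition yg :: "nat \<Rightarrow> int \<Rightarrow> int \<Rightarrow> int \<Rightarrow> int \<Rightarrow> real" where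
  "yg q a b c d = Rg q a b c d - 2 * (lam q)^2 * ((mu q * c + d)^2 + (lam q)^2 * c^2)"

text \<open>N_{z_q}: values of R over Gamma = PSL(2,Z); elements of PSL(2,Z) are represented by
  SL(2,Z) matrices (R, x, y do not depend on the sign of the representative).\<close>
definition Nset :: "nat \<Rightarrow> real set" where
  "Nset q = {Rg q a b c d | a b c d. a * d - b * c = 1}"

definition Lset :: "nat \<Rightarrow> real \<Rightarrow> (real \<times> real) set" where
  "Lset q n = {(xg q a b c d, yg q a b c d) | a b c d. a * d - b * c = 1 \<and> Rg q a b c d = n}"

definition cn :: "nat \<Rightarrow> real \<Rightarrow> real" where
  "cn q n = (if (even q \<and> n / 2 \<in> \<int>) \<or> (odd q \<and> 2 * n / real q \<in> \<int>) then 1/2 else 1/4)"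

end

theory Submission
  imports Defs "HOL-Computational_Algebra.Primes"
begin


abbreviation QS :: "nat set" where "QS \<equiv> {3, 4, 7, 8, 11, 19, 43, 67, 163}"

definition m2 :: "nat \<Rightarrow> int" where "m2 q = (if q \<in> {4,8} then 0 else 1)"
definition nz :: "nat \<Rightarrow> int" where "nz q = (if q \<in> {4,8} then int q div 4 else (int q + 1) div 4)"

lemma lam_pos: "lam q > 0 \<longleftrightarrow> q > 0"
  by (simp add: lam_def)

lemma lam_sq: "(lam q)^2 = real q / 4"
  by (simp add: lam_def power_divide)

lemma mu2: "2 * mu q = of_int (m2 q)"
  by (simp add: mu_def m2_def)

lemma nzq: assumes "q \<in> QS" shows "(mu q)^2 + (lam q)^2 = of_int (nz q)"
  using assms lam_sq[of q] by (auto simp: mu_def nz_def power_divide)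

lemma q_eq: assumes "q \<in> QS" shows "int q = 4 * nz q - m2 q"
  using assms by (auto simp: m2_def nz_def)

lemma cmod_zq: "(cmod (zq q))^2 = (mu q)^2 + (lam q)^2"
  by (simp add: zq_def cmod_def)

lemma Im_zq: "Im (zq q) = lam q" and Re_zq: "Re (zq q) = mu q"
  by (simp_all add: zq_def)

lemma part1_core:
  fixes a b c d :: int
  assumes q: "q > 0" and det: "a * d - b * c = 1"
  defines "z \<equiv> zq q"
  defines "p \<equiv> of_int a * z + of_int b" and "m \<equiv> of_int c * z + of_int d"
  shows "m \<noteq> 0"
    and "Rg q a b c d = 2 * (lam q)^2 + (cmod (p - z * m))^2"
    and "(cmod (p - cnj z * m))^2 = (cmod (p - z * m))^2 + 4 * (lam q)^2"
    and "Complex (yg q a b c d) (xg q a b c d) = (p - cnj z * m) * cnj (p - z * m)"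
proof -
  have lp: "lam q > 0" using q lam_pos by blast
  have detr: "real_of_int a * real_of_int d - real_of_int b * real_of_int c = 1"
    using det by (metis of_int_1 of_int_diff of_int_mult)
  show mnz: "m \<noteq> 0"
  proof
    assume "m = 0"
    then have "Im m = 0" "Re m = 0" by auto
    then have "c = 0" "d = 0" using lp by (auto simp: m_def z_def zq_def)
    then show False using det by simp
  qed
  have Impm: "Im (p * cnj m) = lam q"
    unfolding p_def m_def z_def zq_def using detr
    by (simp add: algebra_simps)
  have m2pos: "(cmod m)^2 > 0" using mnz by simp
  have cm: "(cmod m)^2 = Re m * Re m + Im m * Im m" by (metis cmod_power2 power2_eq_square)
  have Imq: "Im (p / m) = lam q / (cmod m)^2"
  proof -
    have "Im (p/m) = Im (p * cnj m) / (Re m * Re m + Im m * Im m)"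
      by (simp add: Im_divide algebra_simps power2_eq_square)
    then show ?thesis using Impm cm by simp
  qed
  have zpm: "zq q - p / m = - (p - z * m) / m"
    using mnz by (simp add: z_def field_simps)
  have dist: "(cmod (zq q - p / m))^2 = (cmod (p - z * m))^2 / (cmod m)^2"
    unfolding zpm by (simp add: norm_divide power_divide norm_minus_commute)
  have arg: "1 + (cmod (zq q - p / m))^2 / (2 * Im (zq q) * Im (p / m)) = 1 + (cmod (p - z * m))^2 / (2 * (lam q)^2)"
    unfolding dist Imq Im_zq using m2pos lp mnz by (simp add: field_simps power2_eq_square)
  have ge: "1 \<le> 1 + (cmod (p - z * m))^2 / (2 * (lam q)^2)" using lp by simp
  have moebeq: "moeb a b c d (zq q) = p / m" by (simp add: moeb_def p_def m_def z_def)
  show "Rg q a b c d = 2 * (lam q)^2 + (cmod (p - z * m))^2"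
    unfolding Rg_def hdist_def moebeq arg cosh_arcosh_real[OF ge] using lp by (simp add: field_simps)
  show "(cmod (p - cnj z * m))^2 = (cmod (p - z * m))^2 + 4 * (lam q)^2"
    unfolding p_def m_def z_def zq_def cmod_power2 using detr
    by (simp add: power2_eq_square algebra_simps)
  show "Complex (yg q a b c d) (xg q a b c d) = (p - cnj z * m) * cnj (p - z * m)"
    unfolding yg_def xg_def \<open>Rg q a b c d = 2 * (lam q)^2 + (cmod (p - z * m))^2\<close>
    unfolding p_def m_def z_def zq_def cmod_power2 using detr
    apply (simp add: power2_eq_square algebra_simps complex_eq_iff)
    by algebra
qed

lemma alpha_repr:
  fixes a b c d :: int and q :: nat
  defines "z \<equiv> zq q"
  shows "of_int a * z + of_int b - cnj z * (of_int c * z + of_int d)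
      = of_real (real_of_int b - (cmod (zq q))^2 * c - 2 * mu q * d) + of_real (real_of_int (a + d)) * z"
    and "of_int a * z + of_int b - z * (of_int c * z + of_int d)
      = of_real (real_of_int b + (cmod (zq q))^2 * c) + of_real (real_of_int (a - d) - 2 * mu q * c) * z"
  unfolding z_def zq_def cmod_power2
  by (simp_all add: complex_eq_iff power2_eq_square algebra_simps)

lemma part1:
  fixes q :: nat and a b c d :: int
  assumes hq: "q \<in> QS"
    and det: "a * d - b * c = 1"
  shows "(let n = Rg q a b c d;
              r = real_of_int (a + d);
              u = real_of_int b - (cmod (zq q))^2 * c - 2 * mu q * d;
              s = real_of_int (a - d) - 2 * mu q * c;
              t = real_of_int b + (cmod (zq q))^2 * c
          in r \<in> \<int> \<and> u \<in> \<int> \<and> s \<in> \<int> \<and> t \<in> \<int>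
             \<and> normK (of_real u + of_real r * zq q) = n + 2 * (lam q)^2
             \<and> normK (of_real t + of_real s * zq q) = n - 2 * (lam q)^2
             \<and> Complex (yg q a b c d) (xg q a b c d)
                 = (of_real u + of_real r * zq q) * (of_real t + of_real s * cnj (zq q)))"
proof -
  have q: "q > 0" using hq by auto
  have c2: "(cmod (zq q))^2 = of_int (nz q)" using cmod_zq nzq[OF hq] by simp
  have m2': "2 * mu q * x = of_int (m2 q) * x" for x using mu2[of q] by simp
  note core = part1_core[OF q det]
  note ar = alpha_repr[where q=q and a=a and b=b and c=c and d=d]
  have ints: "real_of_int b - (cmod (zq q))^2 * c - 2 * mu q * d \<in> \<int>"
       "real_of_int (a - d) - 2 * mu q * c \<in> \<int>"
       "real_of_int b + (cmod (zq q))^2 * c \<in> \<int>"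
    unfolding c2 m2' by auto
  have cj: "of_real t + of_real s * cnj (zq q) = cnj (of_real t + of_real s * zq q)" for s t
    by simp
  show ?thesis
    unfolding Let_def normK_def cj
    using ints core(2,3,4) ar by (simp add: algebra_simps)
qed


section \<open>Arithmetic of O_K\<close>

lemma zq_sq: assumes "q \<in> QS" shows "zq q * zq q = of_int (m2 q) * zq q - of_int (nz q)"
proof -
  have e1: "real_of_int (m2 q) = 2 * mu q" by (simp add: mu2)
  have e2: "real_of_int (nz q) = (mu q)^2 + (lam q)^2" by (simp add: nzq[OF assms])
  show ?thesis
    by (simp add: complex_eq_iff zq_def e1 e2 power2_eq_square algebra_simps)
qed

lemma cnj_zq: "cnj (zq q) = of_int (m2 q) - zq q"
proof -
  have "2 * mu q = of_int (m2 q)" by (rule mu2)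
  then show ?thesis by (simp add: complex_eq_iff zq_def)
qed

lemma OK_iff: "w \<in> OK q \<longleftrightarrow> (\<exists>u r. w = of_int u + of_int r * zq q)"
  by (auto simp: OK_def)

lemma OK_I: "of_int u + of_int r * zq q \<in> OK q"
  by (auto simp: OK_def)

lemma OK_0: "0 \<in> OK q" using OK_I[of 0 0 q] by simp
lemma OK_1: "1 \<in> OK q" using OK_I[of 1 0 q] by simp
lemma OK_z: "zq q \<in> OK q" using OK_I[of 0 1 q] by simp
lemma OK_int: "of_int k \<in> OK q" using OK_I[of k 0 q] by simp

lemma OK_add: "x \<in> OK q \<Longrightarrow> y \<in> OK q \<Longrightarrow> x + y \<in> OK q"
proof -
  assume "x \<in> OK q" "y \<in> OK q"
  then obtain u r u' r' where "x = of_int u + of_int r * zq q" "y = of_int u' + of_int r' * zq q"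
    by (auto simp: OK_def)
  then have "x + y = of_int (u + u') + of_int (r + r') * zq q" by (simp add: algebra_simps)
  then show ?thesis using OK_I by metis
qed

lemma OK_uminus: "x \<in> OK q \<Longrightarrow> - x \<in> OK q"
proof -
  assume "x \<in> OK q"
  then obtain u r where "x = of_int u + of_int r * zq q"
    by (auto simp: OK_def)
  then have "- x = of_int (- u) + of_int (- r) * zq q" by (simp add: algebra_simps)
  then show ?thesis using OK_I by metis
qed

lemma OK_diff: "x \<in> OK q \<Longrightarrow> y \<in> OK q \<Longrightarrow> x - y \<in> OK q"
  using OK_add[of x q "-y"] OK_uminus[of y q] by simp

lemma OK_mult: assumes q: "q \<in> QS" shows "x \<in> OK q \<Longrightarrow> y \<in> OK q \<Longrightarrow> x * y \<in> OK q"
proof -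
  assume "x \<in> OK q" "y \<in> OK q"
  then obtain u r u' r' where xy: "x = of_int u + of_int r * zq q" "y = of_int u' + of_int r' * zq q"
    by (auto simp: OK_def)
  have "x * y = of_int (u * u') + of_int (u * r' + r * u') * zq q + of_int (r * r') * (zq q * zq q)"
    unfolding xy by (simp add: algebra_simps)
  also have "\<dots> = of_int (u * u' - r * r' * nz q) + of_int (u * r' + r * u' + r * r' * m2 q) * zq q"
    unfolding zq_sq[OF q] by (simp add: algebra_simps)
  finally show ?thesis using OK_I by metis
qed

lemma OK_cnj: "x \<in> OK q \<Longrightarrow> cnj x \<in> OK q"
proof -
  assume "x \<in> OK q"
  then obtain u r where x: "x = of_int u + of_int r * zq q"
    by (auto simp: OK_def)
  have "cnj x = of_int (u + r * m2 q) + of_int (- r) * zq q"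
    unfolding x complex_cnj_add complex_cnj_mult cnj_zq by (simp add: algebra_simps)
  then show ?thesis using OK_I by metis
qed

lemma normK_repr: assumes q: "q \<in> QS"
  shows "normK (of_int u + of_int r * zq q) = of_int (u^2 + m2 q * u * r + nz q * r^2)"
proof -
  have e1: "real_of_int (m2 q) = 2 * mu q" by (simp add: mu2)
  have e2: "real_of_int (nz q) = (mu q)^2 + (lam q)^2" by (simp add: nzq[OF q])
  show ?thesis
    unfolding normK_def cmod_power2 by (simp add: zq_def e1 e2 power2_eq_square algebra_simps)
qed

lemma normK_int: assumes q: "q \<in> QS" and "w \<in> OK q" shows "\<exists>k::int. normK w = of_int k \<and> k \<ge> 0"
proof -
  obtain u r where "w = of_int u + of_int r * zq q" using assms(2) by (auto simp: OK_def)
  moreover have "normK w \<ge> 0" by (simp add: normK_def)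
  ultimately have "normK w = of_int (u^2 + m2 q * u * r + nz q * r^2)" "normK w \<ge> 0"
    using normK_repr[OF q, of u r] by auto
  then show ?thesis by (metis of_int_0_le_iff)
qed

lemma normK_mult: "normK (x * y) = normK x * normK y"
  by (simp add: normK_def norm_mult power_mult_distrib)

lemma OK_coords_unique: assumes "q > 0"
  and "of_int u + of_int r * zq q = (of_int u' + of_int r' * zq q :: complex)"
  shows "u = u' \<and> r = r'"
proof -
  have lp: "lam q > 0" using assms lam_pos by blast
  from assms(2) have "Im (of_int u + of_int r * zq q) = Im (of_int u' + of_int r' * zq q :: complex)" by simp
  then have "r = r'" using lp by (simp add: zq_def)
  with assms(2) show ?thesis by simp
qed


lemma finite_normset: assumes q: "q > 0" shows "finite {w \<in> OK q. normK w = M}"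
proof -
  have lp: "lam q > 0" using q lam_pos by blast
  have mu1: "0 \<le> mu q" "mu q \<le> 1" by (auto simp: mu_def)
  define K where "K = ceiling (sqrt \<bar>M\<bar> + sqrt \<bar>M\<bar> / lam q)"
  have "{w\<in>OK q. normK w = M} \<subseteq> (\<lambda>(u,r). of_int u + of_int r * zq q) ` ({-K..K} \<times> {-K..K})"
  proof
    fix w assume "w \<in> {w\<in>OK q. normK w = M}"
    then obtain u r where w: "w = of_int u + of_int r * zq q" and n: "normK w = M"
      by (auto simp: OK_def)
    have "M = (cmod w)^2" using n by (simp add: normK_def)
    then have cw: "cmod w = sqrt \<bar>M\<bar>" by simp
    have "\<bar>Im w\<bar> \<le> cmod w" by (rule abs_Im_le_cmod)
    then have r1: "\<bar>real_of_int r\<bar> * lam q \<le> sqrt \<bar>M\<bar>" using lp cw by (simp add: w zq_def abs_mult)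
    then have r2: "\<bar>real_of_int r\<bar> \<le> sqrt \<bar>M\<bar> / lam q" using lp by (simp add: field_simps)
    have "\<bar>Re w\<bar> \<le> cmod w" by (rule abs_Re_le_cmod)
    then have u1: "\<bar>real_of_int u + real_of_int r * mu q\<bar> \<le> sqrt \<bar>M\<bar>" using cw by (simp add: w zq_def)
    have "\<bar>real_of_int r * mu q\<bar> \<le> \<bar>real_of_int r\<bar>" using mu1 by (simp add: abs_mult mult_left_le)
    then have u2: "\<bar>real_of_int u\<bar> \<le> sqrt \<bar>M\<bar> + sqrt \<bar>M\<bar> / lam q" using u1 r2 by linarith
    have r3: "\<bar>real_of_int r\<bar> \<le> sqrt \<bar>M\<bar> + sqrt \<bar>M\<bar> / lam q" using r2 real_sqrt_ge_zero[of "\<bar>M\<bar>"] by linarith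
    have Kc: "sqrt \<bar>M\<bar> + sqrt \<bar>M\<bar> / lam q \<le> real_of_int K" unfolding K_def by (rule le_of_int_ceiling)
    have "real_of_int \<bar>u\<bar> \<le> real_of_int K" "real_of_int \<bar>r\<bar> \<le> real_of_int K" using u2 r3 Kc by auto
    then have "\<bar>u\<bar> \<le> K" "\<bar>r\<bar> \<le> K" by (simp_all only: of_int_le_iff)
    then show "w \<in> (\<lambda>(u,r). of_int u + of_int r * zq q) ` ({-K..K} \<times> {-K..K})"
      using w by (auto intro!: image_eqI[of _ _ "(u, r)"])
  qed
  then show ?thesis by (rule finite_subset) auto
qed

lemma unit_norm: assumes q: "q \<in> QS" and e: "e \<in> unitsK q" shows "normK e = 1"
proof -
  obtain v where v: "v \<in> OK q" "e * v = 1" and eo: "e \<in> OK q" using e by (auto simp: unitsK_def)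
  obtain k where k: "normK e = of_int k" "k \<ge> 0" using normK_int[OF q eo] by auto
  obtain l where l: "normK v = of_int l" "l \<ge> 0" using normK_int[OF q v(1)] by auto
  have "normK e * normK v = 1" using v(2) normK_mult[of e v] by (simp add: normK_def)
  then have "k * l = 1" using k l by (metis of_int_eq_1_iff of_int_mult)
  then have "k = 1" using k(2) l(2) by (simp add: zmult_eq_1_iff)
  then show ?thesis using k by simp
qed

lemma cnj_mult_norm1: "normK e = 1 \<Longrightarrow> e * cnj e = 1"
  by (simp add: normK_def complex_norm_square[symmetric])

lemma mult_cnj_normK: "x * cnj x = of_real (normK x)"
  by (metis complex_norm_square normK_def of_real_power)

lemma units_finite: assumes q: "q \<in> QS" shows "finite (unitsK q)"
proof -
  have "unitsK q \<subseteq> {w \<in> OK q. normK w = 1}" using unit_norm[OF q] by (auto simp: unitsK_def)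
  moreover have "q > 0" using q by auto
  ultimately show ?thesis using finite_normset finite_subset by blast
qed

lemma units_one: "1 \<in> unitsK q" using OK_1 by (force simp: unitsK_def)

lemma units_card_pos: assumes q: "q \<in> QS" shows "card (unitsK q) > 0"
  using units_finite[OF q] units_one card_gt_0_iff by blast

definition Dq :: "nat \<Rightarrow> complex" where "Dq q = zq q - cnj (zq q)"

lemma Dq_nz: "q > 0 \<Longrightarrow> Dq q \<noteq> 0"
  using lam_pos[of q] by (auto simp: Dq_def zq_def complex_eq_iff)

lemma G_iff: assumes q: "q \<in> QS"
  shows "(of_int e + of_int f * zq q) / Dq q \<in> OK q \<longleftrightarrow> (\<exists>x y. e = - m2 q * x - 2 * nz q * y \<and> f = 2 * x + m2 q * y)"
proof -
  have q0: "q > 0" using q by auto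
  have Dn: "Dq q \<noteq> 0" using Dq_nz[OF q0] .
  have Dexp: "Dq q * (of_int x + of_int y * zq q) = of_int (- m2 q * x - 2 * nz q * y) + of_int (2 * x + m2 q * y) * zq q" for x y
  proof -
    have "Dq q * (of_int x + of_int y * zq q) = (2 * zq q - of_int (m2 q)) * (of_int x + of_int y * zq q)"
      by (simp add: Dq_def cnj_zq)
    also have "\<dots> = of_int (- m2 q * x) + of_int (2 * x - m2 q * y) * zq q + 2 * of_int y * (zq q * zq q)"
      by (simp add: algebra_simps)
    also have "\<dots> = of_int (- m2 q * x - 2 * nz q * y) + of_int (2 * x + m2 q * y) * zq q"
      unfolding zq_sq[OF q] by (simp add: algebra_simps)
    finally show ?thesis .
  qed
  have "(of_int e + of_int f * zq q) / Dq q \<in> OK q \<longleftrightarrow> (\<exists>x y. (of_int e + of_int f * zq q) / Dq q = of_int x + of_int y * zq q)"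
    by (simp add: OK_iff)
  also have "\<dots> \<longleftrightarrow> (\<exists>x y. of_int e + of_int f * zq q = Dq q * (of_int x + of_int y * zq q))"
    using Dn by (simp add: divide_eq_eq mult.commute)
  also have "\<dots> \<longleftrightarrow> (\<exists>x y. e = - m2 q * x - 2 * nz q * y \<and> f = 2 * x + m2 q * y)"
    unfolding Dexp using OK_coords_unique[OF q0] by metis
  finally show ?thesis .
qed




lemma rep:
  assumes q: "q \<in> QS" and al: "\<alpha> \<in> OK q" and be: "\<beta> \<in> OK q" and g: "(\<alpha> - \<beta>) / Dq q \<in> OK q"
  shows "\<exists>a b c d :: int. \<alpha> = (of_int a * zq q + of_int b) - cnj (zq q) * (of_int c * zq q + of_int d)
                  \<and> \<beta> = (of_int a * zq q + of_int b) - zq q * (of_int c * zq q + of_int d)"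
proof -
  have q0: "q > 0" using q by auto
  define M where "M = (\<alpha> - \<beta>) / Dq q"
  obtain d c where m: "M = of_int d + of_int c * zq q" using g by (auto simp: OK_iff M_def)
  have "\<alpha> + cnj (zq q) * M \<in> OK q"
    unfolding M_def using OK_add[OF al OK_mult[OF q OK_cnj[OF OK_z] g]] .
  then obtain b a where p: "\<alpha> + cnj (zq q) * M = of_int b + of_int a * zq q" by (auto simp: OK_iff)
  have Dn: "Dq q \<noteq> 0" using Dq_nz[OF q0] .
  have ab: "\<beta> = \<alpha> - Dq q * M" using Dn by (simp add: M_def)
  have a1: "\<alpha> = of_int b + of_int a * zq q - cnj (zq q) * M" using p by (simp add: algebra_simps)
  show ?thesis
  proof (intro exI conjI)
    show "\<alpha> = (of_int a * zq q + of_int b) - cnj (zq q) * (of_int c * zq q + of_int d)"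
      using a1 m by (simp add: algebra_simps)
    show "\<beta> = (of_int a * zq q + of_int b) - zq q * (of_int c * zq q + of_int d)"
      unfolding ab a1 m by (simp add: Dq_def algebra_simps)
  qed
qed

lemma fiber_count:
  assumes "finite P" "\<And>x. x \<in> P \<Longrightarrow> card {y \<in> P. f y = f x} = k"
  shows "card P = k * card (f ` P)"
proof -
  have "P = (\<Union>w \<in> f ` P. {y \<in> P. f y = w})" by auto
  then have "card P = card (\<Union>w \<in> f ` P. {y \<in> P. f y = w})" by simp
  also have "\<dots> = (\<Sum>w \<in> f ` P. card {y \<in> P. f y = w})"
    by (rule card_UN_disjoint) (use assms(1) in auto)
  also have "\<dots> = (\<Sum>w \<in> f ` P. k)"
    by (rule sum.cong) (use assms(2) in auto)
  finally show ?thesis by simp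
qed


lemma half_count:
  assumes fA: "finite SA" and fB: "finite SB"
    and sig1: "\<And>b. b \<in> SB \<Longrightarrow> \<sigma> b \<in> SB" and sig2: "\<And>b. b \<in> SB \<Longrightarrow> \<sigma> (\<sigma> b) = b"
    and G: "\<And>a b. a \<in> SA \<Longrightarrow> b \<in> SB \<Longrightarrow> G a b \<longleftrightarrow> \<not> G a (\<sigma> b)"
  shows "2 * card {(a, b). a \<in> SA \<and> b \<in> SB \<and> G a b} = card SA * card SB"
proof -
  have one: "2 * card {b \<in> SB. G a b} = card SB" if a: "a \<in> SA" for a
  proof -
    have i1: "\<sigma> ` {b \<in> SB. G a b} \<subseteq> {b \<in> SB. \<not> G a b}"
    proof
      fix y assume "y \<in> \<sigma> ` {b \<in> SB. G a b}"
      then obtain b where b: "b \<in> SB" "G a b" "y = \<sigma> b" by blast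
      then show "y \<in> {b \<in> SB. \<not> G a b}" using G[OF a b(1)] sig1[OF b(1)] by simp
    qed
    have i2: "\<sigma> ` {b \<in> SB. \<not> G a b} \<subseteq> {b \<in> SB. G a b}"
    proof
      fix y assume "y \<in> \<sigma> ` {b \<in> SB. \<not> G a b}"
      then obtain b where b: "b \<in> SB" "\<not> G a b" "y = \<sigma> b" by blast
      have "\<sigma> b \<in> SB" using sig1[OF b(1)] .
      then have "G a (\<sigma> b) \<longleftrightarrow> \<not> G a (\<sigma> (\<sigma> b))" using G[OF a] by blast
      then show "y \<in> {b \<in> SB. G a b}" using b sig2[OF b(1)] sig1[OF b(1)] by simp
    qed
    have bij: "bij_betw \<sigma> {b \<in> SB. G a b} {b \<in> SB. \<not> G a b}"
      by (rule bij_betw_byWitness[where f' = \<sigma>]) (use i1 i2 sig2 in auto)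
    have c1: "card {b \<in> SB. G a b} = card {b \<in> SB. \<not> G a b}" using bij_betw_same_card[OF bij] .
    have e: "{b \<in> SB. G a b} \<union> {b \<in> SB. \<not> G a b} = SB" by blast
    have "card ({b \<in> SB. G a b} \<union> {b \<in> SB. \<not> G a b}) = card {b \<in> SB. G a b} + card {b \<in> SB. \<not> G a b}"
      by (rule card_Un_disjoint) (use fB in auto)
    then have "card SB = card {b \<in> SB. G a b} + card {b \<in> SB. \<not> G a b}" unfolding e .
    with c1 show ?thesis by simp
  qed
  have "{(a, b). a \<in> SA \<and> b \<in> SB \<and> G a b} = (SIGMA a:SA. {b \<in> SB. G a b})" by blast
  then have "card {(a, b). a \<in> SA \<and> b \<in> SB \<and> G a b} = (\<Sum>a\<in>SA. card {b \<in> SB. G a b})"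
    using fA fB by simp
  then have "2 * card {(a, b). a \<in> SA \<and> b \<in> SB \<and> G a b} = (\<Sum>a\<in>SA. 2 * card {b \<in> SB. G a b})"
    by (simp add: sum_distrib_left)
  also have "\<dots> = (\<Sum>a\<in>SA. card SB)" using one by simp
  finally show ?thesis by simp
qed



lemma sq4: fixes x :: int shows "x^2 mod 4 = (if even x then 0 else 1)"
proof (cases "even x")
  case True
  then obtain k where "x = 2 * k" by blast
  then show ?thesis by (simp add: power2_eq_square)
next
  case False
  then obtain k where k: "x = 2 * k + 1" by (metis oddE)
  have "x^2 = 4 * (k^2 + k) + 1" using k by (simp add: power2_eq_square algebra_simps)
  moreover have "\<And>y K :: int. y = 4 * K + 1 \<Longrightarrow> y mod 4 = 1" by presburger
  ultimately have "x^2 mod 4 = 1" by blast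
  then show ?thesis using False by simp
qed

lemma sq8odd: fixes x :: int assumes "odd x" shows "x^2 mod 8 = 1"
proof -
  obtain k where k: "x = 2 * k + 1" using assms by (metis oddE)
  have "even (k * (k + 1))" by simp
  then obtain j where "k * (k + 1) = 2 * j" by (metis evenE)
  then have "x^2 = 8 * j + 1" using k by (simp add: power2_eq_square algebra_simps)
  moreover have "\<And>y K :: int. y = 8 * K + 1 \<Longrightarrow> y mod 8 = 1" by presburger
  ultimately show ?thesis by blast
qed

lemma sq16even: fixes x :: int assumes "even x" shows "x^2 mod 16 = (if 4 dvd x then 0 else 4)"
proof -
  obtain k where k: "x = 2 * k" using assms by blast
  have "x^2 = 4 * k^2" using k by (simp add: power2_eq_square)
  then have "x^2 mod 16 = 4 * (k^2 mod 4)" using mod_mult_mult1[of 4 "k^2" 4] by simp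
  moreover have "4 dvd x \<longleftrightarrow> even k" using k by auto
  ultimately show ?thesis using sq4[of k] by auto
qed

lemma q4_all: fixes u r t w A :: int
  assumes a: "u^2 + r^2 = A" and b: "t^2 + w^2 = A - 4" and e: "even A"
  shows "even (u - t) \<and> even (r - w)"
proof -
  have "even (u^2 + r^2)" using a e by simp
  then have p1: "even (u + r)" by simp
  have "even (t^2 + w^2)" using b e by simp
  then have p2: "even (t + w)" by simp
  have m1: "A mod 4 = (if odd u then 2 else 0)"
  proof -
    have "A mod 4 = (u^2 mod 4 + r^2 mod 4) mod 4" using a mod_add_eq[of "u^2" 4 "r^2"] by simp
    then show ?thesis using p1 sq4[of u] sq4[of r] by (auto simp: even_add)
  qed
  have m2: "(A - 4) mod 4 = (if odd t then 2 else 0)"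
  proof -
    have "(A - 4) mod 4 = (t^2 mod 4 + w^2 mod 4) mod 4" using b mod_add_eq[of "t^2" 4 "w^2"] by simp
    then show ?thesis using p2 sq4[of t] sq4[of w] by (auto simp: even_add)
  qed
  have "(A - 4) mod 4 = A mod 4" by presburger
  then have "odd u \<longleftrightarrow> odd t" using m1 m2 by (auto split: if_splits)
  then show ?thesis using p1 p2 by presburger
qed

lemma q4_half: fixes u r t w A :: int
  assumes a: "u^2 + r^2 = A" and b: "t^2 + w^2 = A - 4" and o: "odd A"
  shows "(even (u - t) \<and> even (r - w)) \<longleftrightarrow> \<not> (even (u + w) \<and> even (r - t))"
proof -
  have "odd (u^2 + r^2)" using a o by simp
  then have p1: "odd (u + r)" by simp
  have "odd (t^2 + w^2)" using b o by simp
  then have p2: "odd (t + w)" by simp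
  show ?thesis using p1 p2 by presburger
qed

lemma dbl_mod16: fixes X :: int shows "(2 * X) mod 16 = 2 * (X mod 8)"
  using mod_mult_mult1[of 2 X 8] by simp

lemma dbl_mod8: fixes X :: int shows "(2 * X) mod 8 = 2 * (X mod 4)"
  using mod_mult_mult1[of 2 X 4] by simp

lemma q8_norm_even: fixes u r A :: int
  assumes a: "u^2 + 2 * r^2 = A" and e: "even A"
  shows "even u" "A mod 4 = (if odd r then 2 else 0)"
    "odd r \<Longrightarrow> A mod 16 = 2 \<or> A mod 16 = 6"
    "even r \<Longrightarrow> A mod 8 = (if 4 dvd u then 0 else 4)"
proof -
  have "even (u^2 + 2 * r^2)" using a e by simp
  then show eu: "even u" by simp
  have u4: "u^2 mod 4 = 0" using sq4[of u] eu by simp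
  have "A mod 4 = (u^2 mod 4 + (2 * r^2) mod 4) mod 4" using a mod_add_eq[of "u^2" 4 "2 * r^2"] by simp
  moreover have "(2 * r^2) mod 4 = 2 * (r^2 mod 2)" using mod_mult_mult1[of 2 "r^2" 2] by simp
  ultimately show "A mod 4 = (if odd r then 2 else 0)" using u4 by (auto simp: odd_iff_mod_2_eq_one[symmetric])
  have u16: "u^2 mod 16 = (if 4 dvd u then 0 else 4)" using sq16even[OF eu] .
  show "A mod 16 = 2 \<or> A mod 16 = 6" if r: "odd r"
  proof -
    have "A mod 16 = (u^2 mod 16 + (2 * r^2) mod 16) mod 16" using a mod_add_eq[of "u^2" 16 "2 * r^2"] by simp
    moreover have "(2 * r^2) mod 16 = 2" using dbl_mod16[of "r^2"] sq8odd[OF r] by simp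
    ultimately show ?thesis using u16 by (auto split: if_splits)
  qed
  show "A mod 8 = (if 4 dvd u then 0 else 4)" if r: "even r"
  proof -
    obtain k where k: "r = 2 * k" using r by blast
    have "A = u^2 + 8 * k^2" using a k by (simp add: power2_eq_square)
    then have "A mod 8 = u^2 mod 8" by simp
    moreover have "u^2 mod 8 = (u^2 mod 16) mod 8" by (simp add: mod_mod_cancel)
    ultimately show ?thesis using u16 by auto
  qed
qed

lemma q8_norm_odd: fixes u r A :: int
  assumes a: "u^2 + 2 * r^2 = A" and o: "odd A"
  shows "odd u" "A mod 8 = (if odd r then 3 else 1)"
proof -
  have "odd (u^2 + 2 * r^2)" using a o by simp
  then show ou: "odd u" by simp
  have "A mod 8 = (u^2 mod 8 + (2 * r^2) mod 8) mod 8" using a mod_add_eq[of "u^2" 8 "2 * r^2"] by simp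
  moreover have "(2 * r^2) mod 8 = 2 * (r^2 mod 4)" by (rule dbl_mod8)
  ultimately show "A mod 8 = (if odd r then 3 else 1)" using sq8odd[OF ou] sq4[of r] by auto
qed

lemma q8_all: fixes u r t w A :: int
  assumes a: "u^2 + 2 * r^2 = A" and b: "t^2 + 2 * w^2 = A - 8" and e: "even A"
  shows "4 dvd (u - t) \<and> even (r - w)"
proof -
  have e2: "even (A - 8)" using e by simp
  note A1 = q8_norm_even[OF a e] and B1 = q8_norm_even[OF b e2]
  have "(A - 8) mod 4 = A mod 4" by presburger
  then have rw: "odd r \<longleftrightarrow> odd w" using A1(2) B1(2) by (auto split: if_splits)
  show ?thesis
  proof (cases "odd r")
    case True
    then have "A mod 16 = 2 \<or> A mod 16 = 6" "(A - 8) mod 16 = 2 \<or> (A - 8) mod 16 = 6"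
      using A1(3) B1(3) rw by auto
    then have False by presburger
    then show ?thesis ..
  next
    case False
    then have "A mod 8 = (if 4 dvd u then 0 else 4)" "(A - 8) mod 8 = (if 4 dvd t then 0 else 4)"
      using A1(4) B1(4) rw by auto
    moreover have "(A - 8) mod 8 = A mod 8" by presburger
    ultimately have "4 dvd u \<longleftrightarrow> 4 dvd t" by (auto split: if_splits)
    then show ?thesis using A1(1) B1(1) False rw by presburger
  qed
qed

lemma q8_half: fixes u r t w A :: int
  assumes a: "u^2 + 2 * r^2 = A" and b: "t^2 + 2 * w^2 = A - 8" and o: "odd A"
  shows "(4 dvd (u - t) \<and> even (r - w)) \<longleftrightarrow> \<not> (4 dvd (u + t) \<and> even (r + w))"
proof -
  have o2: "odd (A - 8)" using o by simp
  note A1 = q8_norm_odd[OF a o] and B1 = q8_norm_odd[OF b o2]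
  have "(A - 8) mod 8 = A mod 8" by presburger
  then have rw: "odd r \<longleftrightarrow> odd w" using A1(2) B1(2) by (auto split: if_splits)
  show ?thesis using A1(1) B1(1) rw by presburger
qed



lemma Godd: fixes Q N e f :: int assumes N: "4*N = Q + 1" and o: "odd Q"
  shows "(\<exists>x y. e = - x - 2*N*y \<and> f = 2*x + y) \<longleftrightarrow> Q dvd 2*e + f"
proof
  assume "\<exists>x y. e = - x - 2*N*y \<and> f = 2*x + y"
  then obtain x y where "e = - x - 2*N*y" "f = 2*x + y" by blast
  then have "2*e + f = y - (4*N) * y" by (simp add: algebra_simps)
  also have "\<dots> = Q * (- y)" unfolding N by (simp add: algebra_simps)
  finally have "2*e + f = Q * (- y)" .
  then show "Q dvd 2*e + f" by simp
next
  assume "Q dvd 2*e + f"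
  then obtain k where k: "2*e + f = Q * k" by blast
  obtain h where h: "Q = 2*h + 1" using o by (metis oddE)
  show "\<exists>x y. e = - x - 2*N*y \<and> f = 2*x + y"
  proof (intro exI conjI)
    have N2: "2 * N = h + 1" using N h by simp
    show "e = - (e + f - h*k) - 2*N*(-k)" using k h N2 by (simp add: algebra_simps)
    show "f = 2*(e + f - h*k) + (-k)" using k h by (simp add: algebra_simps)
  qed
qed

lemma sq_id: fixes Q N u r A :: int assumes "4*N = Q + 1" "u^2 + u*r + N*r^2 = A"
  shows "(2*u + r)^2 = 4*A - Q*r^2"
proof -
  have "(2*u + r)^2 = 4*(u^2 + u*r + N*r^2) - (4*N - 1)*r^2" by (simp add: power2_eq_square algebra_simps)
  also have "\<dots> = 4*A - Q*r^2" using assms by simp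
  finally show ?thesis .
qed

lemma odd_all: fixes Q N u r t w A :: int
  assumes p: "prime Q" and N: "4*N = Q + 1" and QA: "Q dvd A"
    and a: "u^2 + u*r + N*r^2 = A" and b: "t^2 + t*w + N*w^2 = A - Q"
  shows "Q dvd 2*(u - t) + (r - w)"
proof -
  have "(2*u + r)^2 = 4*A - Q*r^2" using sq_id[OF N a] .
  then have "Q dvd (2*u + r)^2" using QA by simp
  then have X: "Q dvd 2*u + r" using p prime_dvd_power by blast
  have "(2*t + w)^2 = 4*(A - Q) - Q*w^2" using sq_id[OF N b] .
  then have "Q dvd (2*t + w)^2" using QA by simp
  then have Y: "Q dvd 2*t + w" using p prime_dvd_power by blast
  have e: "2*(u - t) + (r - w) = (2*u + r) - (2*t + w)" by simp
  show ?thesis unfolding e by (rule dvd_diff[OF X Y])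
qed

lemma odd_half: fixes Q N u r t w A :: int
  assumes p: "prime Q" and o: "odd Q" and N: "4*N = Q + 1" and QA: "\<not> Q dvd A"
    and a: "u^2 + u*r + N*r^2 = A" and b: "t^2 + t*w + N*w^2 = A - Q"
  shows "Q dvd 2*(u - t) + (r - w) \<longleftrightarrow> \<not> Q dvd 2*(u + t) + (r + w)"
proof -
  define X where "X = 2*u + r"
  define Y where "Y = 2*t + w"
  have X2: "X^2 = 4*A - Q*r^2" unfolding X_def using sq_id[OF N a] .
  have Y2: "Y^2 = 4*(A - Q) - Q*w^2" unfolding Y_def using sq_id[OF N b] .
  have "(X - Y) * (X + Y) = Q * (4 - r^2 + w^2)"
    using X2 Y2 by (simp add: algebra_simps power2_eq_square)
  then have "Q dvd (X - Y) * (X + Y)" by simp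
  then have one: "Q dvd X - Y \<or> Q dvd X + Y" using p prime_dvd_mult_iff by blast
  have notboth: "\<not> (Q dvd X - Y \<and> Q dvd X + Y)"
  proof
    assume "Q dvd X - Y \<and> Q dvd X + Y"
    then have "Q dvd (X - Y) + (X + Y)" using dvd_add by blast
    then have "Q dvd 2 * X" by (simp add: algebra_simps mult_2)
    then have "Q dvd 2 \<or> Q dvd X" using p prime_dvd_mult_iff by blast
    moreover have "\<not> Q dvd 2"
    proof
      assume "Q dvd 2"
      then have "Q \<le> 2" by (simp add: zdvd_imp_le)
      moreover have "Q \<ge> 2" using p prime_ge_2_int by blast
      ultimately have "Q = 2" by simp
      with o show False by simp
    qed
    ultimately have "Q dvd X" by blast
    then have "Q dvd X^2" by (simp add: power2_eq_square)
    moreover have "4*A = X^2 + Q*r^2" using X2 by simp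
    ultimately have "Q dvd 4*A" by simp
    then have "Q dvd 4 \<or> Q dvd A" using p prime_dvd_mult_iff by blast
    moreover have "\<not> Q dvd 4"
    proof
      assume "Q dvd 4"
      then have "Q dvd 2 * 2" by simp
      then have "Q dvd 2" using p prime_dvd_mult_iff by blast
      then have "Q \<le> 2" by (simp add: zdvd_imp_le)
      moreover have "Q \<ge> 2" using p prime_ge_2_int by blast
      ultimately have "Q = 2" by simp
      with o show False by simp
    qed
    ultimately show False using QA by blast
  qed
  have e1: "2*(u - t) + (r - w) = X - Y" by (simp add: X_def Y_def)
  have e2: "2*(u + t) + (r + w) = X + Y" by (simp add: X_def Y_def)
  show ?thesis unfolding e1 e2 using one notboth by blast
qed




lemma coords:
  assumes q: "q \<in> QS" and a: "\<alpha> \<in> OK q" and n: "normK \<alpha> = of_int K"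
  shows "\<exists>u r. \<alpha> = of_int u + of_int r * zq q \<and> u^2 + m2 q * u * r + nz q * r^2 = K"
proof -
  obtain u r where ur: "\<alpha> = of_int u + of_int r * zq q" using a by (auto simp: OK_iff)
  have "real_of_int (u^2 + m2 q * u * r + nz q * r^2) = of_int K" using normK_repr[OF q, of u r] ur n by simp
  then have "u^2 + m2 q * u * r + nz q * r^2 = K" by (simp only: of_int_eq_iff)
  with ur show ?thesis by blast
qed

lemma G_coords:
  assumes q: "q \<in> QS"
  shows "((of_int u + of_int r * zq q) - (of_int t + of_int w * zq q)) / Dq q \<in> OK q
     \<longleftrightarrow> (\<exists>x y. u - t = - m2 q * x - 2 * nz q * y \<and> r - w = 2 * x + m2 q * y)"
proof -
  have e: "(of_int u + of_int r * zq q) - (of_int t + of_int w * zq q) = of_int (u - t) + of_int (r - w) * zq q"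
    by (simp add: algebra_simps)
  show ?thesis unfolding e by (rule G_iff[OF q])
qed

lemma cn_odd:
  fixes Ai :: int
  assumes "odd q"
  shows "cn q (of_int Ai - real q / 2) = (if int q dvd Ai then 1/2 else 1/4)"
proof -
  have q0: "q > 0" using assms by (cases q) auto
  have iff: "2 * (of_int Ai - real q / 2) / real q \<in> \<int> \<longleftrightarrow> int q dvd Ai"
  proof
    assume "2 * (of_int Ai - real q / 2) / real q \<in> \<int>"
    then obtain j where j: "2 * (of_int Ai - real q / 2) / real q = of_int j" by (auto elim: Ints_cases)
    then have "2 * of_int Ai - real q = real q * of_int j" using q0 by (simp add: field_simps)
    then have "real_of_int (2 * Ai) = real_of_int (int q * (j + 1))" by (simp add: algebra_simps)
    then have "2 * Ai = int q * (j + 1)" by (simp only: of_int_eq_iff)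
    then have "int q dvd 2 * Ai" by simp
    moreover have "coprime (int q) 2" using assms by simp
    ultimately show "int q dvd Ai" by (simp add: coprime_dvd_mult_right_iff)
  next
    assume "int q dvd Ai"
    then obtain k where "Ai = int q * k" by blast
    then have "2 * (of_int Ai - real q / 2) / real q = of_int (2 * k - 1)" using q0 by (simp add: field_simps)
    then show "2 * (of_int Ai - real q / 2) / real q \<in> \<int>" by simp
  qed
  show ?thesis unfolding cn_def using assms iff by auto
qed

lemma cn_even:
  fixes Ai :: int
  assumes "q = 4 \<or> q = 8"
  shows "cn q (of_int Ai - real q / 2) = (if even Ai then 1/2 else 1/4)"
proof -
  have iff: "(of_int Ai - real q / 2) / 2 \<in> \<int> \<longleftrightarrow> even Ai"
  proof
    assume "(of_int Ai - real q / 2) / 2 \<in> \<int>"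
    then obtain j where j: "(of_int Ai - real q / 2) / 2 = of_int j" by (auto elim: Ints_cases)
    then have "real_of_int Ai = real_of_int (2 * j + int q div 2)" using assms by auto
    then have "Ai = 2 * j + int q div 2" by (simp only: of_int_eq_iff)
    then show "even Ai" using assms by auto
  next
    assume "even Ai"
    then obtain k where "Ai = 2 * k" by blast
    then have "(of_int Ai - real q / 2) / 2 = of_int (k - int q div 4)" using assms by (elim disjE) simp_all
    then show "(of_int Ai - real q / 2) / 2 \<in> \<int>" by (metis Ints_of_int)
  qed
  show ?thesis unfolding cn_def using assms iff by auto
qed


lemma half_count2:
  assumes fA: "finite SA" and fB: "finite SB"
    and sig1: "\<And>b. b \<in> SB \<Longrightarrow> \<sigma> b \<in> SB" and tau1: "\<And>b. b \<in> SB \<Longrightarrow> \<tau> b \<in> SB"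
    and st: "\<And>b. b \<in> SB \<Longrightarrow> \<sigma> (\<tau> b) = b" and ts: "\<And>b. b \<in> SB \<Longrightarrow> \<tau> (\<sigma> b) = b"
    and G: "\<And>a b. a \<in> SA \<Longrightarrow> b \<in> SB \<Longrightarrow> G a b \<longleftrightarrow> \<not> G a (\<sigma> b)"
  shows "2 * card {(a, b). a \<in> SA \<and> b \<in> SB \<and> G a b} = card SA * card SB"
proof -
  have one: "2 * card {b \<in> SB. G a b} = card SB" if a: "a \<in> SA" for a
  proof -
    have i1: "\<sigma> ` {b \<in> SB. G a b} \<subseteq> {b \<in> SB. \<not> G a b}"
    proof
      fix y assume "y \<in> \<sigma> ` {b \<in> SB. G a b}"
      then obtain b where b: "b \<in> SB" "G a b" "y = \<sigma> b" by blast
      then show "y \<in> {b \<in> SB. \<not> G a b}" using G[OF a b(1)] sig1[OF b(1)] by simp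
    qed
    have i2: "\<tau> ` {b \<in> SB. \<not> G a b} \<subseteq> {b \<in> SB. G a b}"
    proof
      fix y assume "y \<in> \<tau> ` {b \<in> SB. \<not> G a b}"
      then obtain b where b: "b \<in> SB" "\<not> G a b" "y = \<tau> b" by blast
      have tb: "\<tau> b \<in> SB" using tau1[OF b(1)] .
      then have "G a (\<tau> b) \<longleftrightarrow> \<not> G a (\<sigma> (\<tau> b))" using G[OF a] by blast
      then show "y \<in> {b \<in> SB. G a b}" using b st[OF b(1)] tb by simp
    qed
    have bij: "bij_betw \<sigma> {b \<in> SB. G a b} {b \<in> SB. \<not> G a b}"
      by (rule bij_betw_byWitness[where f' = \<tau>]) (use i1 i2 st ts in auto)
    have c1: "card {b \<in> SB. G a b} = card {b \<in> SB. \<not> G a b}" using bij_betw_same_card[OF bij] .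
    have e: "{b \<in> SB. G a b} \<union> {b \<in> SB. \<not> G a b} = SB" by blast
    have "card ({b \<in> SB. G a b} \<union> {b \<in> SB. \<not> G a b}) = card {b \<in> SB. G a b} + card {b \<in> SB. \<not> G a b}"
      by (rule card_Un_disjoint) (use fB in auto)
    then have "card SB = card {b \<in> SB. G a b} + card {b \<in> SB. \<not> G a b}" unfolding e .
    with c1 show ?thesis by simp
  qed
  have "{(a, b). a \<in> SA \<and> b \<in> SB \<and> G a b} = (SIGMA a:SA. {b \<in> SB. G a b})" by blast
  then have "card {(a, b). a \<in> SA \<and> b \<in> SB \<and> G a b} = (\<Sum>a\<in>SA. card {b \<in> SB. G a b})"
    using fA fB by simp
  then have "2 * card {(a, b). a \<in> SA \<and> b \<in> SB \<and> G a b} = (\<Sum>a\<in>SA. 2 * card {b \<in> SB. G a b})"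
    by (simp add: sum_distrib_left)
  also have "\<dots> = (\<Sum>a\<in>SA. card SB)" using one by simp
  finally show ?thesis by simp
qed

lemma prime_oddq: assumes "q \<in> QS" "odd q" shows "prime (int q)"
proof -
  have "q \<in> {3, 7, 11, 19, 43, 67, 163}" using assms by auto
  then have "prime q" by (auto simp: prime_nat_iff' atLeastLessThan_nat_numeral)
  then show ?thesis by simp
qed

lemma odd_params: assumes "q \<in> QS" "odd q" shows "m2 q = 1" "4 * nz q = int q + 1"
  using assms q_eq[OF assms(1)] by (auto simp: m2_def)

lemma G_odd: assumes q: "q \<in> QS" and o: "odd q"
  shows "((of_int u + of_int r * zq q) - (of_int t + of_int w * zq q)) / Dq q \<in> OK q
     \<longleftrightarrow> int q dvd 2 * (u - t) + (r - w)"
proof -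
  have "(\<exists>x y. u - t = - m2 q * x - 2 * nz q * y \<and> r - w = 2 * x + m2 q * y) \<longleftrightarrow>
        (\<exists>x y. u - t = - x - 2 * nz q * y \<and> r - w = 2 * x + y)" using odd_params[OF q o] by simp
  also have "\<dots> \<longleftrightarrow> int q dvd 2 * (u - t) + (r - w)"
    by (rule Godd) (use odd_params[OF q o] o in auto)
  finally show ?thesis using G_coords[OF q] by simp
qed

lemma G_4: shows "((of_int u + of_int r * zq 4) - (of_int t + of_int w * zq 4)) / Dq 4 \<in> OK 4
     \<longleftrightarrow> even (u - t) \<and> even (r - w)"
proof -
  have "m2 4 = 0" "nz 4 = 1" by (simp_all add: m2_def nz_def)
  then have "(\<exists>x y. u - t = - m2 4 * x - 2 * nz 4 * y \<and> r - w = 2 * x + m2 4 * y) \<longleftrightarrow>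
        (\<exists>x y. u - t = - 2 * y \<and> r - w = 2 * x)" by simp
  also have "\<dots> \<longleftrightarrow> even (u - t) \<and> even (r - w)" by presburger
  finally show ?thesis using G_coords[of 4] by simp
qed

lemma G_8: shows "((of_int u + of_int r * zq 8) - (of_int t + of_int w * zq 8)) / Dq 8 \<in> OK 8
     \<longleftrightarrow> 4 dvd (u - t) \<and> even (r - w)"
proof -
  have "m2 8 = 0" "nz 8 = 2" by (simp_all add: m2_def nz_def)
  then have "(\<exists>x y. u - t = - m2 8 * x - 2 * nz 8 * y \<and> r - w = 2 * x + m2 8 * y) \<longleftrightarrow>
        (\<exists>x y. u - t = - 4 * y \<and> r - w = 2 * x)" by simp
  also have "\<dots> \<longleftrightarrow> 4 dvd (u - t) \<and> even (r - w)" by presburger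
  finally show ?thesis using G_coords[of 8] by simp
qed


lemma count_P:
  fixes Ai :: int
  assumes hq: "q \<in> QS"
  defines "SA \<equiv> {w \<in> OK q. normK w = of_int Ai}"
    and "SB \<equiv> {w \<in> OK q. normK w = of_int (Ai - int q)}"
  defines "P \<equiv> {(a, b). a \<in> SA \<and> b \<in> SB \<and> (a - b) / Dq q \<in> OK q}"
  shows "(cn q (of_int Ai - real q / 2) = 1/2 \<and> card P = card SA * card SB)
       \<or> (cn q (of_int Ai - real q / 2) = 1/4 \<and> 2 * card P = card SA * card SB)"
proof -
  have q0: "q > 0" using hq by auto
  have fA: "finite SA" unfolding SA_def by (rule finite_normset[OF q0])
  have fB: "finite SB" unfolding SB_def by (rule finite_normset[OF q0])
  have cA: "\<exists>u r. a = of_int u + of_int r * zq q \<and> u^2 + m2 q * u * r + nz q * r^2 = Ai" if "a \<in> SA" for a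
    using coords[OF hq] that unfolding SA_def by blast
  have cB: "\<exists>u r. a = of_int u + of_int r * zq q \<and> u^2 + m2 q * u * r + nz q * r^2 = Ai - int q" if "a \<in> SB" for a
    using coords[OF hq] that unfolding SB_def by blast
  have negB: "- b \<in> SB" if "b \<in> SB" for b
    using that OK_uminus unfolding SB_def by (auto simp: normK_def)
  have all: "card P = card SA * card SB" if "\<And>a b. a \<in> SA \<Longrightarrow> b \<in> SB \<Longrightarrow> (a - b) / Dq q \<in> OK q"
  proof -
    have "P = SA \<times> SB" unfolding P_def using that by auto
    then show ?thesis by (simp add: card_cartesian_product)
  qed
  consider (odd) "odd q" | (four) "q = 4" | (eight) "q = 8" using hq by auto
  then show ?thesis
  proof cases
    case odd
    note op = odd_params[OF hq odd]
    have pr: "prime (int q)" using prime_oddq[OF hq odd] .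
    have oq: "odd (int q)" using odd by simp
    show ?thesis
    proof (cases "int q dvd Ai")
      case True
      have "cn q (of_int Ai - real q / 2) = 1/2" using cn_odd[OF odd] True by simp
      moreover have "card P = card SA * card SB"
      proof (rule all)
        fix a b assume a: "a \<in> SA" and b: "b \<in> SB"
        obtain u r where ur: "a = of_int u + of_int r * zq q" "u^2 + u * r + nz q * r^2 = Ai"
          using cA[OF a] op by auto
        obtain t w where tw: "b = of_int t + of_int w * zq q" "t^2 + t * w + nz q * w^2 = Ai - int q"
          using cB[OF b] op by auto
        have "int q dvd 2 * (u - t) + (r - w)"
          by (rule odd_all[OF pr op(2) True ur(2) tw(2)])
        then show "(a - b) / Dq q \<in> OK q" unfolding ur(1) tw(1) using G_odd[OF hq odd] by blast
      qed
      ultimately show ?thesis by blast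
    next
      case False
      have "cn q (of_int Ai - real q / 2) = 1/4" using cn_odd[OF odd] False by simp
      moreover have "2 * card P = card SA * card SB"
        unfolding P_def
      proof (rule half_count2[OF fA fB, where \<sigma> = uminus and \<tau> = uminus])
        fix a b assume a: "a \<in> SA" and b: "b \<in> SB"
        obtain u r where ur: "a = of_int u + of_int r * zq q" "u^2 + u * r + nz q * r^2 = Ai"
          using cA[OF a] op by auto
        obtain t w where tw: "b = of_int t + of_int w * zq q" "t^2 + t * w + nz q * w^2 = Ai - int q"
          using cB[OF b] op by auto
        have nb: "- b = of_int (- t) + of_int (- w) * zq q" using tw(1) by simp
        have "int q dvd 2 * (u - t) + (r - w) \<longleftrightarrow> \<not> int q dvd 2 * (u + t) + (r + w)"
          by (rule odd_half[OF pr oq op(2) False ur(2) tw(2)])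
        moreover have "(a - b) / Dq q \<in> OK q \<longleftrightarrow> int q dvd 2 * (u - t) + (r - w)"
          unfolding ur(1) tw(1) using G_odd[OF hq odd] by blast
        moreover have "(a - (- b)) / Dq q \<in> OK q \<longleftrightarrow> int q dvd 2 * (u + t) + (r + w)"
          unfolding ur(1) nb using G_odd[OF hq odd, of u r "- t" "- w"] by simp
        ultimately show "(a - b) / Dq q \<in> OK q \<longleftrightarrow> \<not> (a - (- b)) / Dq q \<in> OK q" by blast
      qed (auto intro: negB)
      ultimately show ?thesis by blast
    qed
  next
    case four
    have op: "m2 q = 0" "nz q = 1" using four by (simp_all add: m2_def nz_def)
    show ?thesis
    proof (cases "even Ai")
      case True
      have "cn q (of_int Ai - real q / 2) = 1/2" using cn_even[of q Ai] four True by simp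
      moreover have "card P = card SA * card SB"
      proof (rule all)
        fix a b assume a: "a \<in> SA" and b: "b \<in> SB"
        obtain u r where ur: "a = of_int u + of_int r * zq q" "u^2 + r^2 = Ai"
          using cA[OF a] op by auto
        obtain t w where tw: "b = of_int t + of_int w * zq q" "t^2 + w^2 = Ai - 4"
          using cB[OF b] op four by auto
        have "even (u - t) \<and> even (r - w)" by (rule q4_all[OF ur(2) tw(2) True])
        then show "(a - b) / Dq q \<in> OK q" unfolding ur(1) tw(1) using G_4 four by simp
      qed
      ultimately show ?thesis by blast
    next
      case False
      have "cn q (of_int Ai - real q / 2) = 1/4" using cn_even[of q Ai] four False by simp
      moreover have "2 * card P = card SA * card SB"
        unfolding P_def
      proof (rule half_count2[OF fA fB, where \<sigma> = "\<lambda>b. zq q * b" and \<tau> = "\<lambda>b. - (zq q * b)"])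
        have zz: "zq q * zq q = -1" using zq_sq[OF hq] op by simp
        have zOK: "zq q \<in> OK q" by (rule OK_z)
        have nz1: "normK (zq q) = 1" using normK_repr[OF hq, of 0 1] op by simp
        have zS: "zq q * b \<in> SB" if "b \<in> SB" for b
          using that OK_mult[OF hq zOK] nz1 unfolding SB_def by (auto simp: normK_mult)
        then show "zq q * b \<in> SB" if "b \<in> SB" for b using that by blast
        show "- (zq q * b) \<in> SB" if "b \<in> SB" for b
          using zS[OF that] OK_uminus unfolding SB_def by (auto simp: normK_def)
        show "zq q * - (zq q * b) = b" for b
          using zz by (simp add: mult.assoc[symmetric])
        show "- (zq q * (zq q * b)) = b" for b
          using zz by (simp add: mult.assoc[symmetric])
        fix a b assume a: "a \<in> SA" and b: "b \<in> SB"
        obtain u r where ur: "a = of_int u + of_int r * zq q" "u^2 + r^2 = Ai"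
          using cA[OF a] op by auto
        obtain t w where tw: "b = of_int t + of_int w * zq q" "t^2 + w^2 = Ai - 4"
          using cB[OF b] op four by auto
        have "zq q * b = of_int t * zq q + of_int w * (zq q * zq q)"
          unfolding tw(1) by (simp add: algebra_simps)
        then have zb: "zq q * b = of_int (- w) + of_int t * zq q"
          using zz by simp
        have "(even (u - t) \<and> even (r - w)) \<longleftrightarrow> \<not> (even (u + w) \<and> even (r - t))"
          by (rule q4_half[OF ur(2) tw(2) False])
        moreover have "(a - b) / Dq q \<in> OK q \<longleftrightarrow> even (u - t) \<and> even (r - w)"
          unfolding ur(1) tw(1) using G_4 four by simp
        moreover have "(a - zq q * b) / Dq q \<in> OK q \<longleftrightarrow> even (u + w) \<and> even (r - t)"
          unfolding ur(1) zb using G_4[of u r "- w" t] four by simp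
        ultimately show "(a - b) / Dq q \<in> OK q \<longleftrightarrow> \<not> (a - zq q * b) / Dq q \<in> OK q" by blast
      qed
      ultimately show ?thesis by blast
    qed
  next
    case eight
    have op: "m2 q = 0" "nz q = 2" using eight by (simp_all add: m2_def nz_def)
    show ?thesis
    proof (cases "even Ai")
      case True
      have "cn q (of_int Ai - real q / 2) = 1/2" using cn_even[of q Ai] eight True by simp
      moreover have "card P = card SA * card SB"
      proof (rule all)
        fix a b assume a: "a \<in> SA" and b: "b \<in> SB"
        obtain u r where ur: "a = of_int u + of_int r * zq q" "u^2 + 2 * r^2 = Ai"
          using cA[OF a] op by auto
        obtain t w where tw: "b = of_int t + of_int w * zq q" "t^2 + 2 * w^2 = Ai - 8"
          using cB[OF b] op eight by auto
        have "4 dvd (u - t) \<and> even (r - w)" by (rule q8_all[OF ur(2) tw(2) True])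
        then show "(a - b) / Dq q \<in> OK q" unfolding ur(1) tw(1) using G_8 eight by simp
      qed
      ultimately show ?thesis by blast
    next
      case False
      have "cn q (of_int Ai - real q / 2) = 1/4" using cn_even[of q Ai] eight False by simp
      moreover have "2 * card P = card SA * card SB"
        unfolding P_def
      proof (rule half_count2[OF fA fB, where \<sigma> = uminus and \<tau> = uminus])
        fix a b assume a: "a \<in> SA" and b: "b \<in> SB"
        obtain u r where ur: "a = of_int u + of_int r * zq q" "u^2 + 2 * r^2 = Ai"
          using cA[OF a] op by auto
        obtain t w where tw: "b = of_int t + of_int w * zq q" "t^2 + 2 * w^2 = Ai - 8"
          using cB[OF b] op eight by auto
        have nb: "- b = of_int (- t) + of_int (- w) * zq q" using tw(1) by simp
        have "(4 dvd (u - t) \<and> even (r - w)) \<longleftrightarrow> \<not> (4 dvd (u + t) \<and> even (r + w))"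
          by (rule q8_half[OF ur(2) tw(2) False])
        moreover have "(a - b) / Dq q \<in> OK q \<longleftrightarrow> 4 dvd (u - t) \<and> even (r - w)"
          unfolding ur(1) tw(1) using G_8 eight by simp
        moreover have "(a - (- b)) / Dq q \<in> OK q \<longleftrightarrow> 4 dvd (u + t) \<and> even (r + w)"
          unfolding ur(1) nb using G_8[of u r "- t" "- w"] eight by simp
        ultimately show "(a - b) / Dq q \<in> OK q \<longleftrightarrow> \<not> (a - (- b)) / Dq q \<in> OK q" by blast
      qed (auto intro: negB)
      ultimately show ?thesis by blast
    qed
  qed
qed


lemma norm_diff_det:
  fixes a b c d :: int
  shows "(cmod ((of_int a * zq q + of_int b) - cnj (zq q) * (of_int c * zq q + of_int d)))^2
       = (cmod ((of_int a * zq q + of_int b) - zq q * (of_int c * zq q + of_int d)))^2 + 4 * (lam q)^2 * of_int (a * d - b * c)"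
  unfolding zq_def cmod_power2 by (simp add: power2_eq_square algebra_simps)

lemma OK_I': "of_int a * zq q + of_int b \<in> OK q"
  using OK_I[of b a q] by (simp add: add.commute)

lemma part2:
  assumes hq: "q \<in> QS" and nN: "n \<in> Nset q"
  shows "real (card (Lset q n)) = 2 * cn q n / real (card (unitsK q))
                 * real (rK q (n + 2 * (lam q)^2)) * real (rK q (n - 2 * (lam q)^2))"
proof -
  have q0: "q > 0" using hq by auto
  have lp: "lam q > 0" using q0 lam_pos by blast
  have l4: "4 * (lam q)^2 = real q" by (simp add: lam_sq)
  obtain a0 b0 c0 d0 where det0: "a0 * d0 - b0 * c0 = 1" and n0: "n = Rg q a0 b0 c0 d0"
    using nN by (auto simp: Nset_def)
  define A where "A = n + 2 * (lam q)^2"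
  define B where "B = n - 2 * (lam q)^2"
  define \<alpha>0 where "\<alpha>0 = (of_int a0 * zq q + of_int b0) - cnj (zq q) * (of_int c0 * zq q + of_int d0)"
  define \<beta>0 where "\<beta>0 = (of_int a0 * zq q + of_int b0) - zq q * (of_int c0 * zq q + of_int d0)"
  note core0 = part1_core[OF q0 det0]
  have a0OK: "\<alpha>0 \<in> OK q" unfolding \<alpha>0_def
    by (intro OK_diff OK_mult[OF hq] OK_cnj OK_z OK_I')
  have nA0: "normK \<alpha>0 = A"
    using core0(2,3) unfolding \<alpha>0_def normK_def A_def n0 by simp
  have nB0: "normK \<beta>0 = B"
    using core0(2) unfolding \<beta>0_def normK_def B_def n0 by simp
  obtain Ai where Ai: "A = of_int Ai" using normK_int[OF hq a0OK] nA0 by auto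
  have BA: "B = A - real q" unfolding A_def B_def using l4 by simp
  have Bnn: "B \<ge> 0" using nB0 unfolding normK_def by (metis zero_le_power2)
  have Apos: "A > 0" using BA Bnn q0 by simp
  have nAi: "n = of_int Ai - real q / 2" using Ai l4 unfolding A_def by simp
  have BAi: "B = of_int (Ai - int q)" using BA Ai by simp
  define SA where "SA = {w \<in> OK q. normK w = A}"
  define SB where "SB = {w \<in> OK q. normK w = B}"
  define P where "P = {(a, b). a \<in> SA \<and> b \<in> SB \<and> (a - b) / Dq q \<in> OK q}"
  define f where "f = (\<lambda>(a :: complex, b :: complex). a * cnj b)"
  have fA: "finite SA" unfolding SA_def by (rule finite_normset[OF q0])
  have fB: "finite SB" unfolding SB_def by (rule finite_normset[OF q0])
  have fP: "finite P"
  proof (rule finite_subset)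
    show "P \<subseteq> SA \<times> SB" unfolding P_def by auto
  qed (use fA fB in simp)
  have Dn: "Dq q \<noteq> 0" using Dq_nz[OF q0] .
  have repP: "\<exists>a b c d :: int. a * d - b * c = 1
      \<and> \<alpha> = (of_int a * zq q + of_int b) - cnj (zq q) * (of_int c * zq q + of_int d)
      \<and> \<beta> = (of_int a * zq q + of_int b) - zq q * (of_int c * zq q + of_int d)"
    if "(\<alpha>, \<beta>) \<in> P" for \<alpha> \<beta>
  proof -
    from that have al: "\<alpha> \<in> OK q" "normK \<alpha> = A" and be: "\<beta> \<in> OK q" "normK \<beta> = B"
      and g: "(\<alpha> - \<beta>) / Dq q \<in> OK q" by (auto simp: P_def SA_def SB_def)
    obtain a b c d :: int where ab: "\<alpha> = (of_int a * zq q + of_int b) - cnj (zq q) * (of_int c * zq q + of_int d)"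
      "\<beta> = (of_int a * zq q + of_int b) - zq q * (of_int c * zq q + of_int d)"
      using rep[OF hq al(1) be(1) g] by blast
    have "A = B + 4 * (lam q)^2 * of_int (a * d - b * c)"
      using norm_diff_det[where q=q and a=a and b=b and c=c and d=d] al(2) be(2) unfolding ab normK_def by simp
    then have "4 * (lam q)^2 * of_int (a * d - b * c) = 4 * (lam q)^2 * 1" using BA l4 by simp
    then have "real_of_int (a * d - b * c) = 1" using lp by simp
    then have "a * d - b * c = 1" by linarith
    with ab show ?thesis by blast
  qed
  have L: "Lset q n = (\<lambda>w. (Im w, Re w)) ` (f ` P)"
  proof
    show "Lset q n \<subseteq> (\<lambda>w. (Im w, Re w)) ` (f ` P)"
    proof
      fix xy assume "xy \<in> Lset q n"
      then obtain a b c d where det: "a * d - b * c = 1" and Rn: "Rg q a b c d = n"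
        and xy: "xy = (xg q a b c d, yg q a b c d)" by (auto simp: Lset_def)
      note core = part1_core[OF q0 det]
      define \<alpha> where "\<alpha> = (of_int a * zq q + of_int b) - cnj (zq q) * (of_int c * zq q + of_int d)"
      define \<beta> where "\<beta> = (of_int a * zq q + of_int b) - zq q * (of_int c * zq q + of_int d)"
      have aOK: "\<alpha> \<in> OK q" unfolding \<alpha>_def by (intro OK_diff OK_mult[OF hq] OK_cnj OK_z OK_I')
      have bOK: "\<beta> \<in> OK q" unfolding \<beta>_def by (intro OK_diff OK_mult[OF hq] OK_cnj OK_z OK_I')
      have nA: "normK \<alpha> = A" using core(2,3) Rn unfolding \<alpha>_def normK_def A_def by simp
      have nB: "normK \<beta> = B" using core(2) Rn unfolding \<beta>_def normK_def B_def by simp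
      have "\<alpha> - \<beta> = Dq q * (of_int c * zq q + of_int d)" unfolding \<alpha>_def \<beta>_def Dq_def by (simp add: algebra_simps)
      then have "(\<alpha> - \<beta>) / Dq q = of_int c * zq q + of_int d" using Dn by simp
      then have g: "(\<alpha> - \<beta>) / Dq q \<in> OK q" using OK_I' by simp
      have inP: "(\<alpha>, \<beta>) \<in> P" unfolding P_def SA_def SB_def using aOK bOK nA nB g by simp
      have "Complex (yg q a b c d) (xg q a b c d) = f (\<alpha>, \<beta>)" using core(4) unfolding f_def \<alpha>_def \<beta>_def by simp
      then have "xy = (\<lambda>w. (Im w, Re w)) (f (\<alpha>, \<beta>))" unfolding xy by (metis complex.sel(1) complex.sel(2))
      then show "xy \<in> (\<lambda>w. (Im w, Re w)) ` (f ` P)" using inP by blast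
    qed
    show "(\<lambda>w. (Im w, Re w)) ` (f ` P) \<subseteq> Lset q n"
    proof
      fix xy assume "xy \<in> (\<lambda>w. (Im w, Re w)) ` (f ` P)"
      then obtain \<alpha> \<beta> where inP: "(\<alpha>, \<beta>) \<in> P" and xy: "xy = (Im (f (\<alpha>, \<beta>)), Re (f (\<alpha>, \<beta>)))" by auto
      obtain a b c d :: int where det: "a * d - b * c = 1"
        and ab: "\<alpha> = (of_int a * zq q + of_int b) - cnj (zq q) * (of_int c * zq q + of_int d)"
          "\<beta> = (of_int a * zq q + of_int b) - zq q * (of_int c * zq q + of_int d)"
        using repP[OF inP] by blast
      note core = part1_core[OF q0 det]
      have nB: "normK \<beta> = B" using inP by (simp add: P_def SB_def)
      have Rn: "Rg q a b c d = n" using core(2) nB unfolding ab normK_def B_def by simp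
      have "Complex (yg q a b c d) (xg q a b c d) = f (\<alpha>, \<beta>)" using core(4) unfolding f_def ab by simp
      then have "xy = (xg q a b c d, yg q a b c d)" unfolding xy by (metis complex.sel(1) complex.sel(2))
      then show "xy \<in> Lset q n" using det Rn unfolding Lset_def by blast
    qed
  qed
  have cardL: "card (Lset q n) = card (f ` P)"
    unfolding L by (rule card_image) (auto intro: inj_onI simp: complex_eq_iff)
  have fib: "card {y \<in> P. f y = f x} = card (unitsK q)" if xP: "x \<in> P" for x
  proof -
    obtain \<alpha> \<beta> where x: "x = (\<alpha>, \<beta>)" by (cases x)
    have inP: "(\<alpha>, \<beta>) \<in> P" using xP x by simp
    then have al: "\<alpha> \<in> OK q" "normK \<alpha> = A" and be: "\<beta> \<in> OK q" "normK \<beta> = B"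
      and g: "(\<alpha> - \<beta>) / Dq q \<in> OK q" by (auto simp: P_def SA_def SB_def)
    have anz: "\<alpha> \<noteq> 0" using al(2) Apos by (auto simp: normK_def)
    have "{y \<in> P. f y = f x} = (\<lambda>e. (e * \<alpha>, e * \<beta>)) ` unitsK q"
    proof
      show "(\<lambda>e. (e * \<alpha>, e * \<beta>)) ` unitsK q \<subseteq> {y \<in> P. f y = f x}"
      proof
        fix y assume "y \<in> (\<lambda>e. (e * \<alpha>, e * \<beta>)) ` unitsK q"
        then obtain e where e: "e \<in> unitsK q" and y: "y = (e * \<alpha>, e * \<beta>)" by blast
        have eOK: "e \<in> OK q" using e by (simp add: unitsK_def)
        have ne: "normK e = 1" using unit_norm[OF hq e] .
        have ec: "e * cnj e = 1" using cnj_mult_norm1[OF ne] .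
        have "e * ((\<alpha> - \<beta>) / Dq q) = (e * \<alpha> - e * \<beta>) / Dq q" by (simp add: right_diff_distrib)
        then have "(e * \<alpha> - e * \<beta>) / Dq q \<in> OK q" using OK_mult[OF hq eOK g] by metis
        moreover have "e * \<alpha> \<in> OK q" "e * \<beta> \<in> OK q" using OK_mult[OF hq eOK] al(1) be(1) by auto
        moreover have "normK (e * \<alpha>) = A" "normK (e * \<beta>) = B" using ne al(2) be(2) by (simp_all add: normK_mult)
        ultimately have "y \<in> P" unfolding y P_def SA_def SB_def by simp
        moreover have "f y = f x"
        proof -
          have "f y = (e * cnj e) * (\<alpha> * cnj \<beta>)" unfolding y f_def by (simp add: algebra_simps)
          then show ?thesis using ec unfolding x f_def by simp
        qed
        ultimately show "y \<in> {y \<in> P. f y = f x}" by simp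
      qed
      show "{y \<in> P. f y = f x} \<subseteq> (\<lambda>e. (e * \<alpha>, e * \<beta>)) ` unitsK q"
      proof
        fix y assume "y \<in> {y \<in> P. f y = f x}"
        then obtain \<alpha>' \<beta>' where y: "y = (\<alpha>', \<beta>')" and yP: "(\<alpha>', \<beta>') \<in> P" and fy: "\<alpha>' * cnj \<beta>' = \<alpha> * cnj \<beta>"
          unfolding x f_def by (cases y) auto
        from yP have al': "\<alpha>' \<in> OK q" "normK \<alpha>' = A" and be': "\<beta>' \<in> OK q" "normK \<beta>' = B"
          and g': "(\<alpha>' - \<beta>') / Dq q \<in> OK q" by (auto simp: P_def SA_def SB_def)
        have anz': "\<alpha>' \<noteq> 0" using al'(2) Apos by (auto simp: normK_def)
        define \<xi> where "\<xi> = \<alpha>' / \<alpha>"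
        have ha: "\<alpha> * cnj \<alpha> = of_real A" using mult_cnj_normK[of \<alpha>] al(2) by simp
        have ha': "\<alpha>' * cnj \<alpha>' = of_real A" using mult_cnj_normK[of \<alpha>'] al'(2) by simp
        have Anz: "(of_real A :: complex) \<noteq> 0" using Apos by simp
        have ca: "cnj \<alpha> = of_real A / \<alpha>" using ha anz by (simp add: field_simps)
        have ca': "cnj \<alpha>' = of_real A / \<alpha>'" using ha' anz' by (simp add: field_simps)
        have a'eq: "\<alpha>' = \<xi> * \<alpha>" unfolding \<xi>_def using anz by simp
        have cb': "cnj \<beta>' = \<alpha> * cnj \<beta> / \<alpha>'" using fy anz' by (simp add: field_simps)
        have b'eq: "\<beta>' = \<xi> * \<beta>"
        proof -
          have "cnj (\<xi> * \<beta>) = cnj \<alpha>' / cnj \<alpha> * cnj \<beta>" unfolding \<xi>_def by simp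
          also have "\<dots> = \<alpha> * cnj \<beta> / \<alpha>'" unfolding ca ca' using anz anz' Anz by (simp add: field_simps)
          finally have "cnj (\<xi> * \<beta>) = cnj \<beta>'" using cb' by simp
          then show ?thesis by (metis complex_cnj_cnj)
        qed
        have nxi: "normK \<xi> = 1" unfolding \<xi>_def normK_def using al(2) al'(2) Apos
          by (simp add: normK_def norm_divide power_divide)
        obtain a b c d :: int where det: "a * d - b * c = 1"
          and ab: "\<alpha> = (of_int a * zq q + of_int b) - cnj (zq q) * (of_int c * zq q + of_int d)"
            "\<beta> = (of_int a * zq q + of_int b) - zq q * (of_int c * zq q + of_int d)"
          using repP[OF inP] by blast
        define p where "p = of_int a * zq q + of_int b"
        define m where "m = of_int c * zq q + of_int d"
        have "\<alpha> - \<beta> = Dq q * m" unfolding ab m_def Dq_def by (simp add: algebra_simps)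
        then have "\<xi> * m = (\<alpha>' - \<beta>') / Dq q" using Dn unfolding a'eq b'eq by (simp add: field_simps)
        then have xm: "\<xi> * m \<in> OK q" using g' by simp
        have "\<xi> * p = \<alpha>' + cnj (zq q) * (\<xi> * m)" unfolding a'eq ab(1) p_def m_def by (simp add: algebra_simps)
        then have xp: "\<xi> * p \<in> OK q" using OK_add[OF al'(1) OK_mult[OF hq OK_cnj[OF OK_z] xm]] by simp
        have "of_int a * m - of_int c * p = (of_int (a * d - b * c) :: complex)"
          unfolding m_def p_def by (simp add: algebra_simps)
        then have one: "of_int a * m - of_int c * p = (1 :: complex)" using det by simp
        have "\<xi> = of_int a * (\<xi> * m) - of_int c * (\<xi> * p)"
          using one by (metis (no_types, lifting) mult.left_commute mult.right_neutral right_diff_distrib)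
        moreover have "of_int a * (\<xi> * m) - of_int c * (\<xi> * p) \<in> OK q"
          using OK_diff[OF OK_mult[OF hq OK_int[of a q] xm] OK_mult[OF hq OK_int[of c q] xp]] .
        ultimately have xiOK: "\<xi> \<in> OK q" by metis
        have "\<xi> * cnj \<xi> = 1" using cnj_mult_norm1[OF nxi] .
        then have "\<xi> \<in> unitsK q" using xiOK OK_cnj[OF xiOK] unfolding unitsK_def by blast
        then show "y \<in> (\<lambda>e. (e * \<alpha>, e * \<beta>)) ` unitsK q" unfolding y a'eq b'eq by blast
      qed
    qed
    moreover have "inj_on (\<lambda>e. (e * \<alpha>, e * \<beta>)) (unitsK q)"
      using anz by (auto intro: inj_onI)
    ultimately show ?thesis by (simp add: card_image)
  qed
  have cardP: "card P = card (unitsK q) * card (f ` P)"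
    by (rule fiber_count[OF fP fib])
  have rA: "rK q (n + 2 * (lam q)^2) = card SA" unfolding rK_def SA_def A_def ..
  have rB: "rK q (n - 2 * (lam q)^2) = card SB" unfolding rK_def SB_def B_def ..
  have cnt: "(cn q n = 1/2 \<and> card P = card SA * card SB) \<or> (cn q n = 1/4 \<and> 2 * card P = card SA * card SB)"
  proof -
    have hn: "A - real q / 2 = n" using l4 unfolding A_def by simp
    show ?thesis using count_P[OF hq, of Ai] unfolding SA_def SB_def P_def Ai[symmetric] BAi[symmetric] hn .
  qed
  have U0: "real (card (unitsK q)) > 0" using units_card_pos[OF hq] by simp
  have LP: "real (card P) = real (card (unitsK q)) * real (card (Lset q n))" using cardP cardL by simp
  show ?thesis
    using cnt
  proof
    assume h: "cn q n = 1/2 \<and> card P = card SA * card SB"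
    then have "real (card SA) * real (card SB) = real (card (unitsK q)) * real (card (Lset q n))"
      using LP by (metis of_nat_mult)
    then show ?thesis using h U0 rA rB by (simp add: field_simps)
  next
    assume h: "cn q n = 1/4 \<and> 2 * card P = card SA * card SB"
    then have "real (card SA) * real (card SB) = 2 * (real (card (unitsK q)) * real (card (Lset q n)))"
      using LP by (metis of_nat_mult of_nat_numeral)
    moreover have c: "cn q n = 1/4" using h by simp
    ultimately show ?thesis using U0 rA rB unfolding c by (simp add: field_simps)
  qed
qed


theorem lemma2p4:
  fixes q :: nat and a b c d :: int
  assumes hq: "q \<in> {3, 4, 7, 8, 11, 19, 43, 67, 163}"
    and det: "a * d - b * c = 1"
  shows "(let n = Rg q a b c d;
              r = real_of_int (a + d);
              u = real_of_int b - (cmod (zq q))^2 * c - 2 * mu q * d;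
              s = real_of_int (a - d) - 2 * mu q * c;
              t = real_of_int b + (cmod (zq q))^2 * c
          in r \<in> \<int> \<and> u \<in> \<int> \<and> s \<in> \<int> \<and> t \<in> \<int>
             \<and> normK (of_real u + of_real r * zq q) = n + 2 * (lam q)^2
             \<and> normK (of_real t + of_real s * zq q) = n - 2 * (lam q)^2
             \<and> Complex (yg q a b c d) (xg q a b c d)
                 = (of_real u + of_real r * zq q) * (of_real t + of_real s * cnj (zq q)))
         \<and> (\<forall>n \<in> Nset q. real (card (Lset q n))
               = 2 * cn q n / real (card (unitsK q))
                 * real (rK q (n + 2 * (lam q)^2)) * real (rK q (n - 2 * (lam q)^2)))"
  using part1[OF hq det] part2[OF hq] by blast

end
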